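(* Let $G=(V,E)$ be a finite connected simple undirected graph with root $e\in V$, and let $k\ge1$ be such that the distance $k$-graph $G^{[k]}$ is non-trivial. Let $N\ge1$ and let $(G^{\star N})^{[k]}$ be the distance $k$-graph of the $N$-fold star power $G^{\star N}$. Then there is a graph $\hat G$ on the vertex set of $G^{\star N}$ such that $$(G^{\star N})^{[k]}=(G^{[k]})^{\star N}\cup\hat G,$$ i.e. the edge set of $(G^{\star N})^{[k]}$ is the union of the edge set of $(G^{[k]})^{\star N}$ (the $N$-fold star power of the rooted graph $(G^{[k]},e)$) and the edge set of $\hat G$, and every vertex $z$ of $\hat G$ (incident to one of its edges) satisfies $\partial_{G^{\star N}}(z,e)<k$.
   Context: All graphs are simple and undirected; $\partial_H$ denotes graph distance in $H$. For a graph $H=(W,F)$ and $k\ge1$, the distance $k$-graph $H^{[k]}$ is the graph on $W$ with edges the pairs $(x,y)$ with $\partial_H(x,y)=k$. For rooted graphs $(G_1,o_1)$, $(G_2,o_2)$ the star product $G_1\star G_2$ has vertex set $V_1\times V_2$, with $(v_1,w_1)\sim(v_2,w_2)$ iff either $v_1=v_2=o_1$ and $w_1\sim w_2$, or $v_1\sim v_2$ and $w_1=w_2=o_2$; it is rooted at $(o_1,o_2)$. The $N$-fold star power $G^{\star N}$ is (on the component of the root) the graph obtained from $N$ disjoint copies of $G$ by identifying their roots into one vertex $e$; $(G^{[k]})^{\star N}$ is formed in the same way from $N$ copies of $G^{[k]}$ rooted at $e$, on the same vertex set. *)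

theory Defs
  imports Main
begin

definition edge_rel :: "'a set \<Rightarrow> ('a \<Rightarrow> 'a \<Rightarrow> bool) \<Rightarrow> ('a \<times> 'a) set" where
  "edge_rel W F = {(a, b). a \<in> W \<and> b \<in> W \<and> F a b}"

definition simple_graph :: "'a set \<Rightarrow> ('a \<Rightarrow> 'a \<Rightarrow> bool) \<Rightarrow> bool" where
  "simple_graph W F \<longleftrightarrow> (\<forall>x y. F x y \<longrightarrow> x \<in> W \<and> y \<in> W) \<and>
     (\<forall>x y. F x y \<longrightarrow> F y x) \<and> (\<forall>x. \<not> F x x)"

definition connected_graph :: "'a set \<Rightarrow> ('a \<Rightarrow> 'a \<Rightarrow> bool) \<Rightarrow> bool" where
  "connected_graph W F \<longleftrightarrow> (\<forall>x\<in>W. \<forall>y\<in>W. \<exists>n. (x, y) \<in> (edge_rel W F) ^^ n)"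

text \<open>Graph distance: length of a shortest walk (meaningful for connected graphs).\<close>
definition gdist :: "'a set \<Rightarrow> ('a \<Rightarrow> 'a \<Rightarrow> bool) \<Rightarrow> 'a \<Rightarrow> 'a \<Rightarrow> nat" where
  "gdist W F x y = (LEAST n. (x, y) \<in> (edge_rel W F) ^^ n)"

definition distk :: "'a set \<Rightarrow> ('a \<Rightarrow> 'a \<Rightarrow> bool) \<Rightarrow> nat \<Rightarrow> 'a \<Rightarrow> 'a \<Rightarrow> bool" where
  "distk W F k x y \<longleftrightarrow> x \<in> W \<and> y \<in> W \<and> gdist W F x y = k"

text \<open>N-fold star power: N copies of (W,F) indexed by i < N, with the roots e
 identified into the single vertex (0,e).\<close>
definition star_emb :: "'a \<Rightarrow> nat \<Rightarrow> 'a \<Rightarrow> nat \<times> 'a" where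
  "star_emb e i v = (if v = e then (0, e) else (i, v))"

definition star_verts :: "'a set \<Rightarrow> 'a \<Rightarrow> nat \<Rightarrow> (nat \<times> 'a) set" where
  "star_verts W e N = {star_emb e i v | i v. i < N \<and> v \<in> W}"

definition star_edges :: "'a set \<Rightarrow> ('a \<Rightarrow> 'a \<Rightarrow> bool) \<Rightarrow> 'a \<Rightarrow> nat \<Rightarrow>
    nat \<times> 'a \<Rightarrow> nat \<times> 'a \<Rightarrow> bool" where
  "star_edges W F e N x y \<longleftrightarrow> (\<exists>i<N. \<exists>u v. u \<in> W \<and> v \<in> W \<and> F u v \<and>
      x = star_emb e i u \<and> y = star_emb e i v)"

end

theory Submission
  imports Defs
begin

lemma relpow_map:
  assumes "\<And>a b. (a,b) \<in> R \<Longrightarrow> (f a, f b) \<in> S"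
  shows "(x,y) \<in> R^^n \<Longrightarrow> (f x, f y) \<in> S^^n"
proof (induction n arbitrary: y)
  case 0 then show ?case by simp
next
  case (Suc n)
  from Suc.prems obtain z where "(x,z) \<in> R^^n" "(z,y) \<in> R" by (meson relpow_Suc_E)
  with Suc.IH assms show ?case by (meson relpow_Suc_I)
qed

lemma relpow_collapse:
  assumes "\<And>a b. (a,b) \<in> R \<Longrightarrow> f a = f b \<or> (f a, f b) \<in> S"
  shows "(x,y) \<in> R^^n \<Longrightarrow> \<exists>m\<le>n. (f x, f y) \<in> S^^m"
proof (induction n arbitrary: y)
  case 0 then show ?case by simp
next
  case (Suc n)
  from Suc.prems obtain z where "(x,z) \<in> R^^n" "(z,y) \<in> R" by (meson relpow_Suc_E)
  with Suc.IH obtain m where m: "m \<le> n" "(f x, f z) \<in> S^^m" by blast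
  from assms[OF \<open>(z,y) \<in> R\<close>] show ?case
  proof
    assume "f z = f y" with m show ?thesis by (metis le_SucI)
  next
    assume "(f z, f y) \<in> S" with m show ?thesis by (meson Suc_le_mono relpow_Suc_I)
  qed
qed

lemma relpow_sym:
  assumes "\<And>a b. (a,b) \<in> R \<Longrightarrow> (b,a) \<in> R"
  shows "(x,y) \<in> R^^n \<Longrightarrow> (y,x) \<in> R^^n"
proof (induction n arbitrary: y)
  case 0 then show ?case by simp
next
  case (Suc n)
  from Suc.prems obtain z where "(x,z) \<in> R^^n" "(z,y) \<in> R" by (meson relpow_Suc_E)
  with Suc.IH assms show ?case by (meson relpow_Suc_I2)
qed

lemma gdist_le: "(x,y) \<in> edge_rel W F ^^ n \<Longrightarrow> gdist W F x y \<le> n"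
  unfolding gdist_def by (rule Least_le)

lemma gdist_walk: "(x,y) \<in> edge_rel W F ^^ n \<Longrightarrow> (x,y) \<in> edge_rel W F ^^ (gdist W F x y)"
  unfolding gdist_def by (rule LeastI)

lemma gdist_self: "gdist W F x x = 0"
  unfolding gdist_def by (rule Least_eq_0) simp

lemma gdist_sym:
  assumes "\<And>a b. F a b \<Longrightarrow> F b a"
  shows "gdist W F x y = gdist W F y x"
proof -
  have s: "\<And>a b. (a,b) \<in> edge_rel W F \<Longrightarrow> (b,a) \<in> edge_rel W F"
    using assms unfolding edge_rel_def by auto
  have "\<And>n. (x,y) \<in> edge_rel W F ^^ n \<longleftrightarrow> (y,x) \<in> edge_rel W F ^^ n"
    using relpow_sym[OF s] by blast
  then show ?thesis unfolding gdist_def by simp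
qed

definition pr :: "'a \<Rightarrow> nat \<Rightarrow> nat \<times> 'a \<Rightarrow> 'a" where
  "pr e i x = (if fst x = i then snd x else e)"

lemma pr_same: "pr e i (star_emb e i c) = c"
  by (simp add: pr_def star_emb_def)

lemma pr_other: "j \<noteq> i \<Longrightarrow> pr e i (star_emb e j c) = e"
  by (simp add: pr_def star_emb_def)

lemma emb_in: "i < N \<Longrightarrow> v \<in> V \<Longrightarrow> star_emb e i v \<in> star_verts V e N"
  unfolding star_verts_def by blast

lemma emb_edge:
  assumes "i < N" "(u,v) \<in> edge_rel V E"
  shows "(star_emb e i u, star_emb e i v) \<in> edge_rel (star_verts V e N) (star_edges V E e N)"
  using assms unfolding edge_rel_def star_edges_def by (auto intro: emb_in)

lemma pr_edge:
  assumes "(a,b) \<in> edge_rel (star_verts V e N) (star_edges V E e N)"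
  shows "pr e i a = pr e i b \<or> (pr e i a, pr e i b) \<in> edge_rel V E"
proof -
  from assms obtain j c d where "j < N" "c \<in> V" "d \<in> V" "E c d"
    "a = star_emb e j c" "b = star_emb e j d"
    unfolding edge_rel_def star_edges_def by auto
  show ?thesis
  proof (cases "j = i")
    case True
    then have "pr e i a = c" "pr e i b = d" using \<open>a = _\<close> \<open>b = _\<close> pr_same by simp_all
    then show ?thesis using \<open>c \<in> V\<close> \<open>d \<in> V\<close> \<open>E c d\<close> unfolding edge_rel_def by simp
  next
    case False
    then have "pr e i a = e" "pr e i b = e" using \<open>a = _\<close> \<open>b = _\<close> pr_other by simp_all
    then show ?thesis by simp
  qed
qed

lemma pr_walk:
  assumes "(x,y) \<in> edge_rel (star_verts V e N) (star_edges V E e N) ^^ n"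
  shows "\<exists>m\<le>n. (pr e i x, pr e i y) \<in> edge_rel V E ^^ m"
  by (rule relpow_collapse[where f="pr e i" and R="edge_rel (star_verts V e N) (star_edges V E e N)"
     and S="edge_rel V E", OF pr_edge assms])

lemma emb_walk:
  assumes "i < N" "(u,v) \<in> edge_rel V E ^^ n"
  shows "(star_emb e i u, star_emb e i v) \<in> edge_rel (star_verts V e N) (star_edges V E e N) ^^ n"
  by (rule relpow_map[where f="star_emb e i" and S="edge_rel (star_verts V e N) (star_edges V E e N)"
     and R="edge_rel V E", OF emb_edge[OF assms(1)] assms(2)])

lemma isometry:
  assumes "connected_graph V E" "i < N" "u \<in> V" "v \<in> V"
  shows "gdist (star_verts V e N) (star_edges V E e N) (star_emb e i u) (star_emb e i v) = gdist V E u v"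
proof -
  from assms obtain n where n: "(u,v) \<in> edge_rel V E ^^ n" unfolding connected_graph_def by blast
  have w: "(u,v) \<in> edge_rel V E ^^ gdist V E u v" by (rule gdist_walk[OF n])
  have w2: "(star_emb e i u, star_emb e i v) \<in> edge_rel (star_verts V e N) (star_edges V E e N) ^^ gdist V E u v"
    by (rule emb_walk[OF assms(2) w])
  have le1: "gdist (star_verts V e N) (star_edges V E e N) (star_emb e i u) (star_emb e i v) \<le> gdist V E u v"
    by (rule gdist_le[OF w2])
  note w3 = gdist_walk[OF w2]
  from pr_walk[OF w3, of i] obtain m where
    "m \<le> gdist (star_verts V e N) (star_edges V E e N) (star_emb e i u) (star_emb e i v)"
    "(u, v) \<in> edge_rel V E ^^ m" by (auto simp: pr_same)
  then have "gdist V E u v \<le> gdist (star_verts V e N) (star_edges V E e N) (star_emb e i u) (star_emb e i v)"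
    using gdist_le by fastforce
  with le1 show ?thesis by simp
qed


lemma emb_root: "star_emb e i e = star_emb e 0 e"
  by (simp add: star_emb_def)

lemma star_conn:
  assumes "connected_graph V E" "e \<in> V" "x \<in> star_verts V e N" "y \<in> star_verts V e N"
  shows "\<exists>n. (x,y) \<in> edge_rel (star_verts V e N) (star_edges V E e N) ^^ n"
proof -
  from assms(3) obtain i u where iu: "i < N" "u \<in> V" "x = star_emb e i u" unfolding star_verts_def by blast
  from assms(4) obtain j v where jv: "j < N" "v \<in> V" "y = star_emb e j v" unfolding star_verts_def by blast
  from assms(1,2) iu obtain a where "(u,e) \<in> edge_rel V E ^^ a" unfolding connected_graph_def by blast
  from emb_walk[OF iu(1) this] have 1: "(x, star_emb e 0 e) \<in> edge_rel (star_verts V e N) (star_edges V E e N) ^^ a"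
    using iu emb_root by metis
  from assms(1,2) jv obtain b where "(e,v) \<in> edge_rel V E ^^ b" unfolding connected_graph_def by blast
  from emb_walk[OF jv(1) this] have 2: "(star_emb e 0 e, y) \<in> edge_rel (star_verts V e N) (star_edges V E e N) ^^ b"
    using jv emb_root by metis
  from 1 2 have "(x,y) \<in> edge_rel (star_verts V e N) (star_edges V E e N) ^^ (a+b)"
    by (auto simp: relpow_add)
  then show ?thesis by blast
qed

theorem lemma4p1:
  fixes V :: "'a set" and E :: "'a \<Rightarrow> 'a \<Rightarrow> bool" and e :: 'a and k N :: nat
  assumes "finite V" and "simple_graph V E" and "connected_graph V E" and "e \<in> V"
    and "k \<ge> 1" and "\<exists>x y. distk V E k x y"
    and "N \<ge> 1"
  shows "\<exists>H :: nat \<times> 'a \<Rightarrow> nat \<times> 'a \<Rightarrow> bool.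
     simple_graph (star_verts V e N) H \<and>
     (\<forall>x y. distk (star_verts V e N) (star_edges V E e N) k x y \<longleftrightarrow>
        star_edges V (distk V E k) e N x y \<or> H x y) \<and>
     (\<forall>z. (\<exists>w. H z w) \<longrightarrow>
        gdist (star_verts V e N) (star_edges V E e N) z (star_emb e 0 e) < k)"
proof -
  define S where "S = star_verts V e N"
  define SE where "SE = star_edges V E e N"
  define D where "D = star_edges V (distk V E k) e N"
  define H where "H = (\<lambda>x y. distk S SE k x y \<and> \<not> D x y)"
  have Esym: "\<And>a b. E a b \<Longrightarrow> E b a" using assms(2) unfolding simple_graph_def by blast
  have SEsym: "\<And>a b. SE a b \<Longrightarrow> SE b a" unfolding SE_def star_edges_def using Esym by blast
  have Dsym: "\<And>a b. D a b \<Longrightarrow> D b a" unfolding D_def star_edges_def distk_def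
    using gdist_sym[of E V, OF Esym] by metis
  have distsym: "\<And>a b. distk S SE k a b \<Longrightarrow> distk S SE k b a"
    unfolding distk_def using gdist_sym[of SE S, OF SEsym] by metis
  have Dimp: "distk S SE k x y" if "D x y" for x y
  proof -
    from that obtain i u v where "i < N" "u \<in> V" "v \<in> V" "distk V E k u v"
      "x = star_emb e i u" "y = star_emb e i v" unfolding D_def star_edges_def by blast
    then show ?thesis unfolding distk_def S_def SE_def
      using emb_in isometry[OF assms(3)] by metis
  qed
  have part3: "gdist S SE z (star_emb e 0 e) < k" if "H z w" for z w
  proof -
    from that have dz: "distk S SE k z w" and nD: "\<not> D z w" unfolding H_def by auto
    then have zS: "z \<in> S" and wS: "w \<in> S" and gzw: "gdist S SE z w = k" unfolding distk_def by auto
    from zS obtain i a where ia: "i < N" "a \<in> V" "z = star_emb e i a" unfolding S_def star_verts_def by blast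
    from wS obtain j b where jb: "j < N" "b \<in> V" "w = star_emb e j b" unfolding S_def star_verts_def by blast
    have iso: "\<And>i u v. i < N \<Longrightarrow> u \<in> V \<Longrightarrow> v \<in> V \<Longrightarrow> gdist S SE (star_emb e i u) (star_emb e i v) = gdist V E u v"
      unfolding S_def SE_def using isometry[OF assms(3)] by blast
    show ?thesis
    proof (cases "a = e")
      case True
      then show ?thesis using ia gdist_self assms(5) emb_root by (metis less_le_trans zero_less_one)
    next
      case aE: False
      have "\<not> (b = e \<or> i = j)"
      proof
        assume "b = e \<or> i = j"
        then have "w = star_emb e i b" using jb emb_root by metis
        then have "D z w" unfolding D_def star_edges_def distk_def
          using ia jb gzw iso[OF ia(1) ia(2) jb(2)] by metis
        with nD show False by simp
      qed
      then have bE: "b \<noteq> e" and ij: "i \<noteq> j" by auto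
      from star_conn[OF assms(3) assms(4), of z N w] zS wS obtain n where
        "(z,w) \<in> edge_rel S SE ^^ n" unfolding S_def SE_def by blast
      then have wk: "(z,w) \<in> edge_rel S SE ^^ k" using gdist_walk gzw by metis
      from assms(5) obtain k' where kk: "k = Suc k'" by (cases k) auto
      from wk kk obtain y where y1: "(z,y) \<in> edge_rel S SE ^^ k'" and y2: "(y,w) \<in> edge_rel S SE"
        by (meson relpow_Suc_E)
      from y2 obtain j' c d where "j' < N" "c \<in> V" "d \<in> V" "y = star_emb e j' c" "w = star_emb e j' d"
        unfolding edge_rel_def SE_def star_edges_def by auto
      with jb bE have "j' = j" "y = star_emb e j c" by (auto simp: star_emb_def split: if_splits)
      then have py: "pr e i y = e" using pr_other ij by metis
      from pr_walk[where i=i, OF y1[unfolded S_def SE_def]] obtain m where "m \<le> k'" "(pr e i z, pr e i y) \<in> edge_rel V E ^^ m"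
        unfolding S_def SE_def by blast
      then have "(a, e) \<in> edge_rel V E ^^ m" "m \<le> k'" using py ia pr_same by metis+
      then have "gdist V E a e < k" using gdist_le kk by (metis le_imp_less_Suc order_trans)
      then show ?thesis using iso[OF ia(1) ia(2) assms(4)] ia emb_root by metis
    qed
  qed
  have h1: "\<And>x y. H x y \<Longrightarrow> x \<in> S \<and> y \<in> S" unfolding H_def distk_def by auto
  have h2: "\<And>x y. H x y \<Longrightarrow> H y x" unfolding H_def using distsym Dsym by blast
  have h3: "\<And>x. \<not> H x x" unfolding H_def distk_def using gdist_self assms(5)
    by (metis not_one_le_zero)
  have "simple_graph S H" unfolding simple_graph_def using h1 h2 h3 by blast
  moreover have "\<forall>x y. distk S SE k x y \<longleftrightarrow> D x y \<or> H x y"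
    unfolding H_def using Dimp by blast
  moreover have "\<forall>z. (\<exists>w. H z w) \<longrightarrow> gdist S SE z (star_emb e 0 e) < k"
    using part3 by blast
  ultimately show ?thesis unfolding S_def SE_def D_def by blast
qed

end
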